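(* Let $n\ge 2$, let $\alpha_1,\dots,\alpha_n>0$ be ordinals, let $i\in[1,n]$ and let $\alpha_i'>\alpha_i$. Then $$\mathbf{w}(\omega^{\alpha_1}\times\dots\times\omega^{\alpha_i}\times\dots\times\omega^{\alpha_n})<\mathbf{w}(\omega^{\alpha_1}\times\dots\times\omega^{\alpha_i'}\times\dots\times\omega^{\alpha_n}).$$
   Context: Products have the componentwise order. The width $\mathbf{w}(A)$ of a wqo $A$ is the rank of the forest of nonempty finite sequences of pairwise incomparable elements of $A$ ordered by initial segment. *)

theory Defs
  imports Main
begin

text \<open>Ordinals are represented as well-orders (type 'a rel, predicate Well_order),
compared with the library relation ordLess (infix <o).\<close>

text \<open>The ordinal power omega^beta of a well-order beta: finitely supported functions
Field beta -> nat, ordered by comparing values at the beta-largest point of difference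
(standard Cantor normal form / ordinal exponentiation definition).\<close>

definition omega_exp_carrier :: "'a rel \<Rightarrow> ('a \<Rightarrow> nat) set" where
  "omega_exp_carrier \<beta> = {f. finite {x. f x \<noteq> 0} \<and> {x. f x \<noteq> 0} \<subseteq> Field \<beta>}"

definition omega_exp_le :: "'a rel \<Rightarrow> ('a \<Rightarrow> nat) \<Rightarrow> ('a \<Rightarrow> nat) \<Rightarrow> bool" where
  "omega_exp_le \<beta> f g \<longleftrightarrow>
     f = g \<or> (\<exists>x. f x < g x \<and> (\<forall>y. (x, y) \<in> \<beta> \<and> y \<noteq> x \<longrightarrow> f y = g y))"

text \<open>The product omega^(alpha 0) x ... x omega^(alpha (n-1)) with the componentwise order.
Tuples are functions on indices, padded with the zero function outside {0..<n}.\<close>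

definition prod_carrier :: "nat \<Rightarrow> (nat \<Rightarrow> 'a rel) \<Rightarrow> (nat \<Rightarrow> 'a \<Rightarrow> nat) set" where
  "prod_carrier n \<alpha> = {x. (\<forall>j<n. x j \<in> omega_exp_carrier (\<alpha> j)) \<and> (\<forall>j\<ge>n. x j = (\<lambda>_. 0))}"

definition prod_le :: "nat \<Rightarrow> (nat \<Rightarrow> 'a rel) \<Rightarrow> (nat \<Rightarrow> 'a \<Rightarrow> nat) \<Rightarrow> (nat \<Rightarrow> 'a \<Rightarrow> nat) \<Rightarrow> bool" where
  "prod_le n \<alpha> x y \<longleftrightarrow> (\<forall>j<n. omega_exp_le (\<alpha> j) (x j) (y j))"

definition incomp_seqs :: "'b set \<Rightarrow> ('b \<Rightarrow> 'b \<Rightarrow> bool) \<Rightarrow> 'b list set" where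
  "incomp_seqs A le = {s. s \<noteq> [] \<and> set s \<subseteq> A \<and>
      (\<forall>i<length s. \<forall>j<length s. i \<noteq> j \<longrightarrow> \<not> le (s ! i) (s ! j))}"

definition forest_rel :: "'b set \<Rightarrow> ('b \<Rightarrow> 'b \<Rightarrow> bool) \<Rightarrow> ('b list \<times> 'b list) set" where
  "forest_rel A le = {(t, s). s \<in> incomp_seqs A le \<and> t \<in> incomp_seqs A le \<and>
      (\<exists>u. u \<noteq> [] \<and> t = s @ u)}"

text \<open>rank_le N R W: the well-founded structure (N, R) has rank at most the ordinal W,
i.e. there is a map from N into W that is strictly decreasing along R
(from a node to its proper extensions).  The rank of the forest is the least such ordinal.\<close>

definition rank_le :: "'x set \<Rightarrow> ('x \<times> 'x) set \<Rightarrow> 'y rel \<Rightarrow> bool" where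
  "rank_le N R W \<longleftrightarrow> Well_order W \<and>
     (\<exists>f. (\<forall>x\<in>N. f x \<in> Field W) \<and>
          (\<forall>t s. (t, s) \<in> R \<longrightarrow> (f t, f s) \<in> W \<and> f t \<noteq> f s))"

definition width_le :: "'b set \<Rightarrow> ('b \<Rightarrow> 'b \<Rightarrow> bool) \<Rightarrow> 'y rel \<Rightarrow> bool" where
  "width_le A le W \<longleftrightarrow> rank_le (incomp_seqs A le) (forest_rel A le) W"

text \<open>w(A) < w(B): some ordinal bounds w(A) but not w(B).  The ordinal w(A) itself is
representable on (a subset of) the node type of the forest of A, so quantifying over
well-orders on 'b list suffices.\<close>

definition width_less :: "'b set \<Rightarrow> ('b \<Rightarrow> 'b \<Rightarrow> bool) \<Rightarrow> 'c set \<Rightarrow> ('c \<Rightarrow> 'c \<Rightarrow> bool) \<Rightarrow> bool" where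
  "width_less A le B le' \<longleftrightarrow> (\<exists>W :: 'b list rel. width_le A le W \<and> \<not> width_le B le' W)"

end

theory Submission
  imports Defs "HOL-Library.Ramsey"
begin


lemma wo_facts:
  assumes "Well_order r"
  shows "refl_on (Field r) r" "trans r" "antisym r" "Total r" "wf (r - Id)"
  using assms by (auto simp: order_on_defs)

lemma wo_total:
  assumes "Well_order r" "x \<in> Field r" "y \<in> Field r"
  shows "(x,y) \<in> r \<or> (y,x) \<in> r"
  using assms wo_facts[OF assms(1)] unfolding total_on_def refl_on_def by metis

lemma wo_refl:
  assumes "Well_order r" "x \<in> Field r" shows "(x,x) \<in> r"
  using assms wo_facts[OF assms(1)] unfolding refl_on_def by blast

lemma wo_trans:
  assumes "Well_order r" "(x,y) \<in> r" "(y,z) \<in> r" shows "(x,z) \<in> r"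
  using assms wo_facts[OF assms(1)] unfolding trans_def by blast

lemma wo_antisym:
  assumes "Well_order r" "(x,y) \<in> r" "(y,x) \<in> r" shows "x = y"
  using assms wo_facts[OF assms(1)] unfolding antisym_def by blast

lemma max_exists:
  assumes "Well_order r" "finite S" "S \<noteq> {}" "S \<subseteq> Field r"
  shows "\<exists>m\<in>S. \<forall>y\<in>S. (y,m) \<in> r"
  using assms(2,3,4)
proof (induction S rule: finite_ne_induct)
  case (singleton x) then show ?case using wo_refl[OF assms(1)] by auto
next
  case (insert x F)
  then obtain m where m: "m \<in> F" "\<forall>y\<in>F. (y,m) \<in> r" by auto
  have "x \<in> Field r" "m \<in> Field r" using insert m by auto
  then have "(x,m) \<in> r \<or> (m,x) \<in> r" using wo_total[OF assms(1)] by blast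
  then show ?case
  proof
    assume "(x,m) \<in> r" then show ?thesis using m by auto
  next
    assume h: "(m,x) \<in> r"
    have "\<forall>y\<in>insert x F. (y,x) \<in> r"
      using h m wo_trans[OF assms(1)] wo_refl[OF assms(1)] insert by auto
    then show ?thesis by auto
  qed
qed

definition bnd :: "'a rel \<Rightarrow> 'a \<Rightarrow> ('a \<Rightarrow> nat) \<Rightarrow> bool" where
  "bnd r m f \<longleftrightarrow> (\<forall>y. f y \<noteq> 0 \<longrightarrow> (y,m) \<in> r)"

lemma bnd_step:
  assumes wo: "Well_order r" and mF: "m \<in> Field r" and b: "bnd r m f"
    and c: "f' \<in> omega_exp_carrier r" and le: "omega_exp_le r f' f" and ne: "f' \<noteq> f"
  shows "bnd r m f'"
  unfolding bnd_def
proof (intro allI impI)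
  fix y assume y: "f' y \<noteq> 0"
  obtain x where x: "f' x < f x" "\<forall>y. (x,y) \<in> r \<and> y \<noteq> x \<longrightarrow> f' y = f y"
    using le ne unfolding omega_exp_le_def by blast
  have xm: "(x,m) \<in> r" using b x(1) unfolding bnd_def by auto
  have yF: "y \<in> Field r" using c y unfolding omega_exp_carrier_def by auto
  show "(y,m) \<in> r"
  proof (rule ccontr)
    assume nym: "(y,m) \<notin> r"
    have my: "(m,y) \<in> r" using wo_total[OF wo mF yF] nym by auto
    have xy: "(x,y) \<in> r" using wo_trans[OF wo xm my] .
    have "y \<noteq> x" using xm nym by auto
    then have "f' y = f y" using x(2) xy by auto
    then have "f y \<noteq> 0" using y by simp
    then show False using b nym unfolding bnd_def by auto
  qed
qed

lemma nat_noninc_eventually_const: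
  fixes c :: "nat \<Rightarrow> nat"
  assumes "\<And>k. c (Suc k) \<le> c k"
  shows "\<exists>K. \<forall>k\<ge>K. c k = c K"
proof -
  obtain K where K: "c K = (LEAST v. v \<in> range c)" by (metis (mono_tags) LeastI rangeE rangeI)
  have "\<forall>k\<ge>K. c k = c K"
  proof (intro allI impI)
    fix k assume "K \<le> k"
    then have "c k \<le> c K" using lift_Suc_antimono_le[of c, OF assms] by blast
    moreover have "c K \<le> c k" unfolding K by (rule Least_le) simp
    ultimately show "c k = c K" by simp
  qed
  then show ?thesis by blast
qed

definition desc :: "'a rel \<Rightarrow> (nat \<Rightarrow> 'a \<Rightarrow> nat) \<Rightarrow> bool" where
  "desc r F \<longleftrightarrow> (\<forall>k. F k \<in> omega_exp_carrier r \<and> omega_exp_le r (F (Suc k)) (F k) \<and> F (Suc k) \<noteq> F k)"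

lemma desc_nonzero:
  assumes "desc r F" shows "\<exists>y. F k y \<noteq> 0"
proof -
  obtain x where "F (Suc k) x < F k x"
    using assms unfolding desc_def omega_exp_le_def by blast
  then show ?thesis by (intro exI[of _ x]) simp
qed

lemma no_desc_bnd:
  assumes wo: "Well_order r"
  shows "m \<in> Field r \<Longrightarrow> desc r F \<Longrightarrow> bnd r m (F 0) \<Longrightarrow> False"
proof (induction m arbitrary: F rule: wf_induct[OF wo_facts(5)[OF wo]])
  case (1 m)
  note IH = "1.IH" and mF = "1.prems"(1) and D = "1.prems"(2) and b0 = "1.prems"(3)
  have car: "\<And>k. F k \<in> omega_exp_carrier r" using D unfolding desc_def by blast
  have ball: "bnd r m (F k)" for k
  proof (induction k)
    case 0 then show ?case using b0 .
  next
    case (Suc k) then show ?case using bnd_step[OF wo mF Suc car] D unfolding desc_def by blast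
  qed
  have cdec: "F (Suc k) m \<le> F k m" for k
  proof -
    obtain x where x: "F (Suc k) x < F k x" "\<forall>y. (x,y) \<in> r \<and> y \<noteq> x \<longrightarrow> F (Suc k) y = F k y"
      using D unfolding desc_def omega_exp_le_def by blast
    show ?thesis
    proof (cases "x = m")
      case True then show ?thesis using x by simp
    next
      case False
      have "(x,m) \<in> r" using ball[of k] x(1) unfolding bnd_def by auto
      then show ?thesis using x(2) False by auto
    qed
  qed
  obtain K where K: "\<forall>k\<ge>K. F k m = F K m"
    using nat_noninc_eventually_const[of "\<lambda>k. F k m", OF cdec] by blast
  define G where "G k = (F (K + k))(m := 0)" for k
  have Gcar: "G k \<in> omega_exp_carrier r" for k
  proof -
    have "{y. G k y \<noteq> 0} \<subseteq> {y. F (K+k) y \<noteq> 0}" unfolding G_def by auto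
    then show ?thesis using car[of "K+k"] unfolding omega_exp_carrier_def
      by (auto intro: finite_subset)
  qed
  have Gdesc: "desc r G"
    unfolding desc_def
  proof (intro allI conjI)
    fix k
    show "G k \<in> omega_exp_carrier r" by (rule Gcar)
    obtain x where x: "F (Suc (K+k)) x < F (K+k) x" "\<forall>y. (x,y) \<in> r \<and> y \<noteq> x \<longrightarrow> F (Suc (K+k)) y = F (K+k) y"
      using D unfolding desc_def omega_exp_le_def by blast
    have "x \<noteq> m" using x(1) K[rule_format, of "K+k"] K[rule_format, of "Suc (K+k)"] by auto
    then have "G (Suc k) x < G k x" "\<forall>y. (x,y) \<in> r \<and> y \<noteq> x \<longrightarrow> G (Suc k) y = G k y"
      using x unfolding G_def by auto
    then show "omega_exp_le r (G (Suc k)) (G k)" "G (Suc k) \<noteq> G k"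
      unfolding omega_exp_le_def by auto
  qed
  obtain y0 where y0: "G 0 y0 \<noteq> 0" using desc_nonzero[OF Gdesc] by blast
  let ?S = "{y. G 0 y \<noteq> 0}"
  have Sfin: "finite ?S" "?S \<subseteq> Field r" using Gcar[of 0] unfolding omega_exp_carrier_def by auto
  obtain m' where m': "m' \<in> ?S" "\<forall>y\<in>?S. (y,m') \<in> r"
    using max_exists[OF wo Sfin(1) _ Sfin(2)] y0 by blast
  have m'ne: "m' \<noteq> m" using m'(1) unfolding G_def by auto
  have "(m', m) \<in> r" using m'(1) ball[of K] unfolding G_def bnd_def by (auto split: if_splits)
  then have lt: "(m', m) \<in> r - Id" using m'ne by auto
  have m'F: "m' \<in> Field r" using m'(1) Sfin(2) by auto
  have "bnd r m' (G 0)" using m'(2) unfolding bnd_def by auto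
  then show False using IH[rule_format, OF lt m'F Gdesc] by blast
qed

lemma no_desc:
  assumes wo: "Well_order r" shows "\<not> desc r F"
proof
  assume D: "desc r F"
  have car: "F 0 \<in> omega_exp_carrier r" using D unfolding desc_def by blast
  obtain y0 where y0: "F 0 y0 \<noteq> 0" using desc_nonzero[OF D] by blast
  let ?S = "{y. F 0 y \<noteq> 0}"
  have Sfin: "finite ?S" "?S \<subseteq> Field r" using car unfolding omega_exp_carrier_def by auto
  obtain m where m: "m \<in> ?S" "\<forall>y\<in>?S. (y,m) \<in> r"
    using max_exists[OF wo Sfin(1) _ Sfin(2)] y0 by blast
  have "bnd r m (F 0)" using m(2) unfolding bnd_def by auto
  then show False using no_desc_bnd[OF wo _ D] m(1) Sfin(2) by blast
qed

lemma omega_total: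
  assumes wo: "Well_order r" and f: "f \<in> omega_exp_carrier r" and g: "g \<in> omega_exp_carrier r"
  shows "omega_exp_le r f g \<or> omega_exp_le r g f"
proof (cases "f = g")
  case True then show ?thesis unfolding omega_exp_le_def by simp
next
  case False
  let ?D = "{x. f x \<noteq> g x}"
  have "?D \<subseteq> {x. f x \<noteq> 0} \<union> {x. g x \<noteq> 0}" by auto
  then have Dfin: "finite ?D" "?D \<subseteq> Field r" using f g unfolding omega_exp_carrier_def
    by (auto intro: finite_subset)
  have "?D \<noteq> {}" using False by auto
  then obtain x where x: "x \<in> ?D" "\<forall>y\<in>?D. (y,x) \<in> r"
    using max_exists[OF wo Dfin(1) _ Dfin(2)] by blast
  have agree: "\<forall>y. (x,y) \<in> r \<and> y \<noteq> x \<longrightarrow> f y = g y"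
    using x wo_antisym[OF wo] by blast
  have "f x < g x \<or> g x < f x" using x(1) by auto
  then show ?thesis unfolding omega_exp_le_def using agree by (metis)
qed



lemma good_comp:
  assumes wo: "Well_order r" and a: "\<forall>k. a k \<in> omega_exp_carrier r" and Z: "infinite (Z::nat set)"
  shows "\<exists>Y\<subseteq>Z. infinite Y \<and> (\<forall>x\<in>Y. \<forall>y\<in>Y. x < y \<longrightarrow> omega_exp_le r (a x) (a y))"
proof -
  define col where "col S = (if omega_exp_le r (a (Min S)) (a (Max S)) then 0 else (1::nat))" for S :: "nat set"
  have cl: "col S < 2" for S unfolding col_def by simp
  have "\<forall>x\<in>Z. \<forall>y\<in>Z. x \<noteq> y \<longrightarrow> col {x, y} < 2" using cl by blast
  from Ramsey2[where Z=Z and f=col and s=2, OF Z this]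
  obtain Y t where Y: "Y \<subseteq> Z" "infinite Y" "t < 2" "\<forall>x\<in>Y. \<forall>y\<in>Y. x\<noteq>y \<longrightarrow> col {x, y} = t"
    by (elim exE conjE) (intro that)
  have mm: "x < y \<Longrightarrow> Min {x,y} = x \<and> Max {x,y} = y" for x y :: nat
    by (simp add: min_def max_def)
  have cx: "\<forall>x\<in>Y. \<forall>y\<in>Y. x < y \<longrightarrow> (t = 0 \<longleftrightarrow> omega_exp_le r (a x) (a y))"
  proof (intro ballI impI)
    fix x y assume xy: "x \<in> Y" "y \<in> Y" "x < y"
    then have "col {x,y} = t" using Y(4) by auto
    moreover have "col {x,y} = (if omega_exp_le r (a x) (a y) then 0 else 1)"
      using mm[OF xy(3)] unfolding col_def by simp
    ultimately show "(t = 0 \<longleftrightarrow> omega_exp_le r (a x) (a y))" by (auto split: if_splits)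
  qed
  show ?thesis
  proof (cases "t = 0")
    case True
    then have "\<forall>x\<in>Y. \<forall>y\<in>Y. x < y \<longrightarrow> omega_exp_le r (a x) (a y)"
      using cx by blast
    then show ?thesis using Y by blast
  next
    case False
    then have nle: "\<forall>x\<in>Y. \<forall>y\<in>Y. x < y \<longrightarrow> \<not> omega_exp_le r (a x) (a y)"
      using cx by blast
    define F where "F k = a (enumerate Y k)" for k
    have sm: "enumerate Y k < enumerate Y (Suc k)" for k
      using strict_mono_enumerate[OF Y(2)] unfolding strict_mono_def by simp
    have "desc r F"
      unfolding desc_def
    proof (intro allI conjI)
      fix k
      show "F k \<in> omega_exp_carrier r" using a unfolding F_def by simp
      have n: "\<not> omega_exp_le r (F k) (F (Suc k))"
        unfolding F_def
        by (rule nle[rule_format, OF enumerate_in_set[OF Y(2)] enumerate_in_set[OF Y(2)] sm])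
      have "omega_exp_le r (F k) (F (Suc k)) \<or> omega_exp_le r (F (Suc k)) (F k)"
        by (rule omega_total[OF wo]) (simp_all add: F_def a)
      with n show "omega_exp_le r (F (Suc k)) (F k)" by simp
      show "F (Suc k) \<noteq> F k" using n unfolding omega_exp_le_def by auto
    qed
    then show ?thesis using no_desc[OF wo, of F] by simp
  qed
qed

lemma good_prod:
  fixes a :: "nat \<Rightarrow> nat \<Rightarrow> 'a \<Rightarrow> nat"
  assumes wo: "\<forall>j<n. Well_order (\<alpha> j)" and a: "\<forall>k. a k \<in> prod_carrier n \<alpha>"
  shows "\<exists>x y. x < y \<and> prod_le n \<alpha> (a x) (a y)"
proof -
  have "d \<le> n \<Longrightarrow> \<exists>Y. infinite (Y::nat set) \<and> (\<forall>x\<in>Y. \<forall>y\<in>Y. (x::nat) < y \<longrightarrow> (\<forall>j<d. omega_exp_le (\<alpha> j) (a x j) (a y j)))" for d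
  proof (induction d)
    case 0 then show ?case by (intro exI[of _ UNIV]) auto
  next
    case (Suc d)
    have dn: "d \<le> n" "d < n" using Suc.prems by simp_all
    obtain Y where Y: "infinite Y" "\<forall>x\<in>Y. \<forall>y\<in>Y. x < y \<longrightarrow> (\<forall>j<d. omega_exp_le (\<alpha> j) (a x j) (a y j))"
      using Suc.IH[OF dn(1)] by blast
    have w1: "Well_order (\<alpha> d)" using wo dn(2) by blast
    have w2: "\<forall>k. a k d \<in> omega_exp_carrier (\<alpha> d)"
      using a dn(2) unfolding prod_carrier_def by blast
    obtain Y' where Y': "Y' \<subseteq> Y" "infinite Y'" "\<forall>x\<in>Y'. \<forall>y\<in>Y'. x < y \<longrightarrow> omega_exp_le (\<alpha> d) (a x d) (a y d)"
      using good_comp[OF w1 w2 Y(1)] by blast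
    show ?case
    proof (intro exI[of _ Y'] conjI Y'(2) ballI impI allI)
      fix x y j assume h: "x \<in> Y'" "y \<in> Y'" "x < y" "j < Suc d"
      show "omega_exp_le (\<alpha> j) (a x j) (a y j)"
      proof (cases "j = d")
        case True then show ?thesis using Y'(3) h by blast
      next
        case False then have "j < d" using h by simp
        then show ?thesis using Y(2) Y'(1) h by blast
      qed
    qed
  qed
  from this[of n] have "\<exists>Y. infinite Y \<and> (\<forall>x\<in>Y. \<forall>y\<in>Y. x < y \<longrightarrow> prod_le n \<alpha> (a x) (a y))"
    unfolding prod_le_def by simp
  then obtain Y where Y: "infinite Y" "\<forall>x\<in>Y. \<forall>y\<in>Y. x < y \<longrightarrow> prod_le n \<alpha> (a x) (a y)"
    by blast
  have "enumerate Y 0 < enumerate Y (Suc 0)"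
    using strict_mono_enumerate[OF Y(1)] unfolding strict_mono_def by simp
  moreover have "enumerate Y 0 \<in> Y" "enumerate Y (Suc 0) \<in> Y" using enumerate_in_set[OF Y(1)] by auto
  ultimately have "prod_le n \<alpha> (a (enumerate Y 0)) (a (enumerate Y (Suc 0)))" using Y(2) by simp
  with \<open>enumerate Y 0 < enumerate Y (Suc 0)\<close> show ?thesis
    by (intro exI[of _ "enumerate Y 0"] exI[of _ "enumerate Y (Suc 0)"] conjI)
qed


lemma wf_forest:
  assumes good: "\<forall>a. (\<forall>k::nat. a k \<in> A) \<longrightarrow> (\<exists>x y. (x::nat) < y \<and> le (a x) (a y))"
  shows "wf (forest_rel A le)"
proof -
  have "\<not> (\<exists>s. \<forall>i. (s (Suc i), s i) \<in> forest_rel A le)"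
  proof
    assume "\<exists>s. \<forall>i. (s (Suc i), s i) \<in> forest_rel A le"
    then obtain s where s: "\<forall>i. (s (Suc i), s i) \<in> forest_rel A le" by blast
    have inc: "s k \<in> incomp_seqs A le" for k using s[rule_format, of k] unfolding forest_rel_def by simp
    have len: "k < length (s k)" for k
    proof (induction k)
      case 0 then show ?case using inc[of 0] unfolding incomp_seqs_def by auto
    next
      case (Suc k)
      obtain u where "u \<noteq> []" "s (Suc k) = s k @ u" using s[rule_format, of k] unfolding forest_rel_def by auto
      then show ?case using Suc by (cases u) auto
    qed
    have pre: "k \<le> l \<Longrightarrow> \<exists>v. s l = s k @ v" for k l
    proof (induction l rule: dec_induct)
      case base then show ?case by auto
    next
      case (step l)
      obtain u where "s (Suc l) = s l @ u" using s[rule_format, of l] unfolding forest_rel_def by auto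
      then show ?case using step by auto
    qed
    define a where "a k = s k ! k" for k
    have "a k \<in> A" for k using inc[of k] len[of k] unfolding a_def incomp_seqs_def by auto
    then obtain x y where xy: "x < y" "le (a x) (a y)" using good[rule_format, of a] by blast
    obtain v where v: "s y = s x @ v" using pre[of x y] xy(1) by auto
    have "a x = s y ! x" unfolding a_def v using len[of x] by (simp add: nth_append)
    moreover have "x < length (s y)" "y < length (s y)" using len[of y] xy(1) by auto
    moreover have "\<not> le (s y ! x) (s y ! y)" using inc[of y] xy(1) \<open>x < length (s y)\<close> \<open>y < length (s y)\<close>
      unfolding incomp_seqs_def by auto
    ultimately have "\<not> le (a x) (a y)" unfolding a_def by simp
    then show False using xy by simp
  qed
  then show ?thesis using wf_iff_no_infinite_down_chain by blast
qed



definition dclosed :: "'a set \<Rightarrow> 'a rel \<Rightarrow> bool" where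
  "dclosed A p \<longleftrightarrow> (\<forall>x y. (x, y) \<in> p \<and> y \<in> A \<longrightarrow> x \<in> A)"

definition extends_on :: "'a set \<Rightarrow> 'a rel \<Rightarrow> 'a rel \<Rightarrow> bool" where
  "extends_on A w p \<longleftrightarrow> (\<forall>x\<in>A. \<forall>y\<in>A. (x, y) \<in> p \<longrightarrow> (x, y) \<in> w)"

lemma wo_extension:
  assumes wfp: "wf p"
  shows "\<exists>w. p \<subseteq> w \<and> Well_order w"
proof -
  define K where "K = {r. Well_order r \<and> dclosed (Field r) p \<and> extends_on (Field r) r p}"
  define I where "I = init_seg_of \<inter> K \<times> K"
  have FI: "Field I = K"
  proof
    show "Field I \<subseteq> K" unfolding I_def Field_def by auto
    show "K \<subseteq> Field I" unfolding I_def Field_def init_seg_of_def by auto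
  qed
  have po: "Partial_order I"
    unfolding partial_order_on_def preorder_on_def FI
    by (auto simp: refl_on_def trans_def antisym_def I_def antisym_init_seg_of
      intro: trans_init_seg_of)
  have ub: "\<exists>u\<in>Field I. \<forall>r\<in>R. (r, u) \<in> I" if RC: "R \<in> Chains I" for R
  proof -
    have RK: "r \<in> K" if "r \<in> R" for r using RC that unfolding Chains_def I_def by blast
    have Ris: "R \<in> Chains init_seg_of" using RC unfolding Chains_def I_def by blast
    have sub: "chain\<^sub>\<subseteq> R" using Ris
      by (auto simp: init_seg_of_def chain_subset_def Chains_def)
    have wos: "\<forall>r\<in>R. Well_order r" using RK unfolding K_def by blast
    then have "\<forall>r\<in>R. Refl r" "\<forall>r\<in>R. trans r" "\<forall>r\<in>R. antisym r" "\<forall>r\<in>R. Total r" "\<forall>r\<in>R. wf (r - Id)"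
      by (simp_all add: order_on_defs)
    note props = this
    have "(\<Union>R) \<subseteq> Field (\<Union>R) \<times> Field (\<Union>R)" using Restr_Field by blast
    moreover have "Refl (\<Union>R)" using props(1) unfolding refl_on_def by fastforce
    moreover have "trans (\<Union>R)" by (rule chain_subset_trans_Union[OF sub props(2)])
    moreover have "antisym (\<Union>R)" by (rule chain_subset_antisym_Union[OF sub props(3)])
    moreover have "Total (\<Union>R)" by (rule chain_subset_Total_Union[OF sub props(4)])
    moreover have "wf ((\<Union>R) - Id)"
    proof -
      have eq: "(\<Union>R) - Id = \<Union>{r - Id | r. r \<in> R}" by blast
      have "wf (\<Union>{r - Id | r. r \<in> R})"
        using wf_Union_wf_init_segs[OF Chains_inits_DiffI[OF Ris]] props(5) by fastforce
      then show ?thesis using eq by simp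
    qed
    ultimately have WU: "Well_order (\<Union>R)" by (simp add: order_on_defs)
    have dU: "dclosed (Field (\<Union>R)) p"
      using RK unfolding K_def dclosed_def Field_def by blast
    have eU: "extends_on (Field (\<Union>R)) (\<Union>R) p"
      unfolding extends_on_def
    proof (intro ballI impI)
      fix x y assume x: "x \<in> Field (\<Union>R)" and y: "y \<in> Field (\<Union>R)" and xy: "(x, y) \<in> p"
      obtain r1 where r1: "r1 \<in> R" "x \<in> Field r1" using x unfolding Field_def by blast
      obtain r2 where r2: "r2 \<in> R" "y \<in> Field r2" using y unfolding Field_def by blast
      have "r1 \<subseteq> r2 \<or> r2 \<subseteq> r1" using sub r1(1) r2(1) unfolding chain_subset_def by blast
      then obtain r where r: "r \<in> R" "x \<in> Field r" "y \<in> Field r"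
        using r1 r2 mono_Field by blast
      then have "(x, y) \<in> r" using RK xy unfolding K_def extends_on_def by blast
      then show "(x, y) \<in> \<Union>R" using r by blast
    qed
    have UK: "\<Union>R \<in> K" using WU dU eU unfolding K_def by blast
    have "\<forall>r\<in>R. (r, \<Union>R) \<in> I"
      using Chains_init_seg_of_Union[OF Ris] RK UK unfolding I_def by blast
    then show ?thesis using UK FI by blast
  qed
  obtain m where mK: "m \<in> K" and max: "\<forall>a\<in>K. (m, a) \<in> I \<longrightarrow> a = m"
    using Zorns_po_lemma[OF po ub] FI by blast
  have wom: "Well_order m" and dm: "dclosed (Field m) p" and em: "extends_on (Field m) m p"
    using mK unfolding K_def by blast+
  have "Field p \<subseteq> Field m"
  proof (rule ccontr)
    let ?Q = "Field p - Field m"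
    assume "\<not> Field p \<subseteq> Field m"
    then obtain x0 where "x0 \<in> ?Q" by blast
    then obtain x where x: "x \<in> ?Q" and min: "\<forall>y. (y, x) \<in> p \<longrightarrow> y \<notin> ?Q"
      using wfp unfolding wf_eq_minimal by blast
    have xm: "x \<notin> Field m" using x by blast
    let ?s = "{(y, x) | y. y \<in> Field m}"
    let ?m = "insert (x, x) m \<union> ?s"
    have Fm: "Field ?m = insert x (Field m)" by (auto simp: Field_def)
    have "Refl m" and "trans m" and "antisym m" and "Total m" and "wf (m - Id)"
      using wom by (simp_all add: order_on_defs)
    note mp = this
    have "?m \<subseteq> Field ?m \<times> Field ?m" using Restr_Field by blast
    moreover have "Refl ?m" using mp(1) Fm by (auto simp: refl_on_def)
    moreover have "trans ?m" using mp(2) xm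
      unfolding trans_def Field_def by blast
    moreover have "antisym ?m" using mp(3) xm
      unfolding antisym_def Field_def by blast
    moreover have "Total ?m" using mp(4) Fm by (auto simp: total_on_def)
    moreover have "wf (?m - Id)"
    proof -
      have "wf ?s"
      proof -
        have "\<not> (\<exists>f. \<forall>i. (f (Suc i), f i) \<in> ?s)"
        proof
          assume "\<exists>f. \<forall>i. (f (Suc i), f i) \<in> ?s"
          then obtain f where "\<forall>i. (f (Suc i), f i) \<in> ?s" by blast
          then have h: "\<forall>i. f i = x \<and> f (Suc i) \<in> Field m" by blast
          then have "f (Suc 0) = x" "f (Suc 0) \<in> Field m" by blast+
          then show False using xm by simp
        qed
        then show ?thesis using wf_iff_no_infinite_down_chain by blast
      qed
      have eq: "?m - Id = (m - Id) \<union> ?s" using xm by (auto simp: Field_def)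
      have "Domain (m - Id) \<inter> Range ?s = {}" using xm by (auto simp: Field_def)
      then show ?thesis unfolding eq using wf_Un[OF mp(5) \<open>wf ?s\<close>] by blast
    qed
    ultimately have wo2: "Well_order ?m" by (simp add: order_on_defs)
    have e2: "extends_on (Field ?m) ?m p"
      unfolding Fm extends_on_def
    proof (intro ballI impI)
      fix a b assume a: "a \<in> insert x (Field m)" and b: "b \<in> insert x (Field m)" and ab: "(a, b) \<in> p"
      show "(a, b) \<in> ?m"
      proof (cases "b = x")
        case True
        then show ?thesis using a by auto
      next
        case False
        then have bm: "b \<in> Field m" using b by blast
        then have "a \<in> Field m" using dm ab unfolding dclosed_def by blast
        then show ?thesis using em bm ab unfolding extends_on_def by blast
      qed
    qed
    have d2: "dclosed (Field ?m) p"
      unfolding Fm dclosed_def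
    proof (intro allI impI)
      fix a b assume h: "(a, b) \<in> p \<and> b \<in> insert x (Field m)"
      show "a \<in> insert x (Field m)"
      proof (cases "b = x")
        case True
        then have "a \<notin> ?Q" using min h by blast
        moreover have "a \<in> Field p" using h unfolding Field_def by blast
        ultimately show ?thesis by blast
      next
        case False then show ?thesis using dm h unfolding dclosed_def by blast
      qed
    qed
    have K2: "?m \<in> K" using wo2 e2 d2 unfolding K_def by blast
    have "m initial_segment_of ?m"
      unfolding init_seg_of_def using xm by (auto simp: Field_def)
    then have "(m, ?m) \<in> I" using mK K2 unfolding I_def by blast
    then have "?m = m" using max K2 by blast
    then show False using xm Fm by auto
  qed
  have "p \<subseteq> m"
  proof
    fix z assume z: "z \<in> p"
    obtain a b where ab: "z = (a, b)" by (cases z)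
    have "a \<in> Field m" "b \<in> Field m" using z ab \<open>Field p \<subseteq> Field m\<close> unfolding Field_def by blast+
    then show "z \<in> m" using em z ab unfolding extends_on_def by blast
  qed
  then show ?thesis using wom by blast
qed



lemma exists_rank:
  fixes A :: "'x set"
  assumes wfA: "wf (forest_rel A le)"
  shows "\<exists>W :: 'x list rel. width_le A le W"
proof -
  define s0 where "s0 = {([] :: 'x list, s) | s. s \<in> incomp_seqs A le}"
  have wfs0: "wf s0"
  proof -
    have "\<not> (\<exists>f. \<forall>i. (f (Suc i), f i) \<in> s0)"
    proof
      assume "\<exists>f. \<forall>i. (f (Suc i), f i) \<in> s0"
      then obtain f where h: "\<forall>i. (f (Suc i), f i) \<in> s0" by blast
      then have "f (Suc 0) = []" "f (Suc 0) \<in> incomp_seqs A le"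
        using h[rule_format, of 0] h[rule_format, of "Suc 0"] unfolding s0_def by auto
      then show False unfolding incomp_seqs_def by simp
    qed
    then show ?thesis using wf_iff_no_infinite_down_chain by blast
  qed
  have "Domain s0 \<inter> Range (forest_rel A le) = {}"
    unfolding s0_def forest_rel_def incomp_seqs_def by auto
  then have "wf (s0 \<union> forest_rel A le)" using wf_Un[OF wfs0 wfA] by blast
  then obtain w where w: "s0 \<union> forest_rel A le \<subseteq> w" "Well_order w"
    using wo_extension by blast
  have "rank_le (incomp_seqs A le) (forest_rel A le) w"
    unfolding rank_le_def
  proof (intro conjI exI[of _ id] ballI allI impI)
    show "Well_order w" by (rule w(2))
    fix x assume "x \<in> incomp_seqs A le"
    then have "([], x) \<in> w" using w(1) unfolding s0_def by blast
    then show "id x \<in> Field w" unfolding Field_def by auto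
  next
    fix t s assume ts: "(t, s) \<in> forest_rel A le"
    then show "(id t, id s) \<in> w" using w(1) by auto
    show "id t \<noteq> id s" using ts unfolding forest_rel_def by auto
  qed
  then show ?thesis unfolding width_le_def by blast
qed

lemma min_rank:
  fixes A :: "'b set"
  assumes wfA: "wf (forest_rel A le)"
  shows "\<exists>W :: 'b list rel. width_le A le W \<and> (\<forall>W' :: 'b list rel. (W', W) \<in> ordLess \<longrightarrow> \<not> width_le A le W')"
proof -
  obtain W0 :: "'b list rel" where "width_le A le W0" using exists_rank[OF wfA] by blast
  then have W0m: "W0 \<in> {W :: 'b list rel. width_le A le W}" by simp
  have "\<exists>z\<in>{W :: 'b list rel. width_le A le W}. \<forall>y. (y, z) \<in> ordLess \<longrightarrow> y \<notin> {W :: 'b list rel. width_le A le W}"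
    by (rule wf_ordLess[unfolded wf_eq_minimal, rule_format, OF W0m])
  then obtain W :: "'b list rel" where "W \<in> {W. width_le A le W}" "\<forall>y. (y, W) \<in> ordLess \<longrightarrow> y \<notin> {W :: 'b list rel. width_le A le W}"
    by blast
  then show ?thesis by blast
qed

lemma incomp_cons:
  assumes eB: "\<forall>a\<in>A. e a \<in> B" and xB: "x \<in> B"
    and refl: "\<forall>a\<in>A. \<forall>b\<in>A. le' (e a) (e b) \<longrightarrow> le a b"
    and inc: "\<forall>a\<in>A. \<not> le' (e a) x \<and> \<not> le' x (e a)"
    and s: "s \<in> incomp_seqs A le"
  shows "x # map e s \<in> incomp_seqs B le'"
  unfolding incomp_seqs_def
proof (intro CollectI conjI allI impI)
  show "x # map e s \<noteq> []" by simp
  have sA: "set s \<subseteq> A" using s unfolding incomp_seqs_def by blast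
  then show "set (x # map e s) \<subseteq> B" using eB xB by auto
  fix i j assume i: "i < length (x # map e s)" and j: "j < length (x # map e s)" and ij: "i \<noteq> j"
  show "\<not> le' ((x # map e s) ! i) ((x # map e s) ! j)"
  proof (cases i)
    case 0
    then obtain j' where j': "j = Suc j'" using ij by (cases j) auto
    then have "j' < length s" using j by simp
    then have "s ! j' \<in> A" using sA by (meson nth_mem subsetD)
    then show ?thesis using inc 0 j' \<open>j' < length s\<close> by simp
  next
    case (Suc i')
    then have i': "i' < length s" using i by simp
    then have sa: "s ! i' \<in> A" using sA by (meson nth_mem subsetD)
    show ?thesis
    proof (cases j)
      case 0 then show ?thesis using inc Suc sa i' by simp
    next
      case (Suc j')
      then have j': "j' < length s" using j by simp
      then have sb: "s ! j' \<in> A" using sA by (meson nth_mem subsetD)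
      have "i' \<noteq> j'" using ij Suc \<open>i = Suc i'\<close> by simp
      then have "\<not> le (s ! i') (s ! j')" using s i' j' unfolding incomp_seqs_def by blast
      then have "\<not> le' (e (s ! i')) (e (s ! j'))" using refl sa sb by blast
      then show ?thesis using Suc \<open>i = Suc i'\<close> i' j' by simp
    qed
  qed
qed

lemma width_strict:
  fixes A :: "'b set" and B :: "'c set"
  assumes wfA: "wf (forest_rel A le)"
    and eB: "\<forall>a\<in>A. e a \<in> B" and xB: "x \<in> B"
    and refl: "\<forall>a\<in>A. \<forall>b\<in>A. le' (e a) (e b) \<longrightarrow> le a b"
    and inc: "\<forall>a\<in>A. \<not> le' (e a) x \<and> \<not> le' x (e a)"
  shows "width_less A le B le'"
proof -
  obtain W :: "'b list rel" where W: "width_le A le W" and Wmin: "\<forall>W' :: 'b list rel. (W', W) \<in> ordLess \<longrightarrow> \<not> width_le A le W'"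
    using min_rank[OF wfA] by blast
  have "\<not> width_le B le' W"
  proof
    assume "width_le B le' W"
    then obtain f where wo: "Well_order W" and fF: "\<forall>y\<in>incomp_seqs B le'. f y \<in> Field W"
      and fR: "\<forall>t s. (t, s) \<in> forest_rel B le' \<longrightarrow> (f t, f s) \<in> W \<and> f t \<noteq> f s"
      unfolding width_le_def rank_le_def by blast
    have x1: "[x] \<in> incomp_seqs B le'" using xB unfolding incomp_seqs_def by auto
    define w where "w = f [x]"
    have wF: "w \<in> Field W" using fF x1 unfolding w_def by blast
    define U where "U = underS W w"
    define W' where "W' = Restr W U"
    have lt: "(W', W) \<in> ordLess" unfolding W'_def U_def
      using underS_Restr_ordLess[OF wo] wF by blast
    define g where "g s = f (x # map e s)" for s
    have cons: "x # map e s \<in> incomp_seqs B le'" if "s \<in> incomp_seqs A le" for s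
      using incomp_cons[OF eB xB refl inc that] .
    have gU: "g s \<in> U" if s: "s \<in> incomp_seqs A le" for s
    proof -
      have "s \<noteq> []" using s unfolding incomp_seqs_def by blast
      then have "(x # map e s, [x]) \<in> forest_rel B le'"
        unfolding forest_rel_def using x1 cons[OF s] by auto
      then show ?thesis using fR unfolding g_def U_def underS_def w_def by auto
    qed
    have gW: "(g s, g s) \<in> W" if s: "s \<in> incomp_seqs A le" for s
    proof -
      have "g s \<in> Field W" using fF cons[OF s] unfolding g_def by blast
      then show ?thesis using wo by (simp add: wo_refl)
    qed
    have "width_le A le W'"
      unfolding width_le_def rank_le_def
    proof (intro conjI exI[of _ g] ballI allI impI)
      show "Well_order W'" unfolding W'_def using Well_order_Restr[OF wo] by blast
      fix s assume s: "s \<in> incomp_seqs A le"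
      then have "(g s, g s) \<in> W'" using gU gW unfolding W'_def by blast
      then show "g s \<in> Field W'" unfolding Field_def by blast
    next
      fix t s assume ts: "(t, s) \<in> forest_rel A le"
      then have st: "s \<in> incomp_seqs A le" "t \<in> incomp_seqs A le" unfolding forest_rel_def by blast+
      obtain u where u: "u \<noteq> []" "t = s @ u" using ts unfolding forest_rel_def by blast
      have "(x # map e t, x # map e s) \<in> forest_rel B le'"
        unfolding forest_rel_def using cons[OF st(1)] cons[OF st(2)] u by auto
      then have "(g t, g s) \<in> W" "g t \<noteq> g s" using fR unfolding g_def by blast+
      then show "(g t, g s) \<in> W'" "g t \<noteq> g s" using gU st unfolding W'_def by blast+
    qed
    then show False using Wmin lt by blast
  qed
  then show ?thesis unfolding width_less_def using W by blast
qed



definition Emap :: "('a \<Rightarrow> 'b) \<Rightarrow> 'a set \<Rightarrow> ('a \<Rightarrow> nat) \<Rightarrow> 'b \<Rightarrow> nat" where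
  "Emap h F f = (\<lambda>q. if q \<in> h ` F then f (inv_into F h q) else 0)"

lemma Emap_app: "inj_on h F \<Longrightarrow> r \<in> F \<Longrightarrow> Emap h F f (h r) = f r"
  unfolding Emap_def by (simp add: inv_into_f_f)

lemma Emap_carrier:
  assumes inj: "inj_on h (Field r)" and hF: "h ` Field r \<subseteq> Field r'" and f: "f \<in> omega_exp_carrier r"
  shows "Emap h (Field r) f \<in> omega_exp_carrier r'"
proof -
  have sub: "{q. Emap h (Field r) f q \<noteq> 0} \<subseteq> h ` {y. f y \<noteq> 0}"
  proof
    fix q assume "q \<in> {q. Emap h (Field r) f q \<noteq> 0}"
    then have q: "q \<in> h ` Field r" "f (inv_into (Field r) h q) \<noteq> 0" unfolding Emap_def by (auto split: if_splits)
    then obtain y where "y \<in> Field r" "q = h y" by blast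
    then show "q \<in> h ` {y. f y \<noteq> 0}" using q(2) inj by (simp add: inv_into_f_f)
  qed
  have "finite {y. f y \<noteq> 0}" using f unfolding omega_exp_carrier_def by blast
  then have "finite {q. Emap h (Field r) f q \<noteq> 0}" using sub by (meson finite_imageI finite_subset)
  moreover have "{q. Emap h (Field r) f q \<noteq> 0} \<subseteq> Field r'" using hF unfolding Emap_def by (auto split: if_splits)
  ultimately show ?thesis unfolding omega_exp_carrier_def by blast
qed

lemma Emap_reflect:
  assumes inj: "inj_on h (Field r)" and comp: "\<forall>a b. (a,b) \<in> r \<longrightarrow> (h a, h b) \<in> r'"
    and f: "f \<in> omega_exp_carrier r" and g: "g \<in> omega_exp_carrier r"
    and le: "omega_exp_le r' (Emap h (Field r) f) (Emap h (Field r) g)"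
  shows "omega_exp_le r f g"
proof (cases "Emap h (Field r) f = Emap h (Field r) g")
  case True
  have "f y = g y" for y
  proof (cases "y \<in> Field r")
    case True
    have "Emap h (Field r) f (h y) = Emap h (Field r) g (h y)"
      using \<open>Emap h (Field r) f = Emap h (Field r) g\<close> by simp
    then show ?thesis using Emap_app[OF inj True, of f] Emap_app[OF inj True, of g] by simp
  next
    case False
    have "f y = 0"
    proof (rule ccontr)
      assume "f y \<noteq> 0" then have "y \<in> {y. f y \<noteq> 0}" by simp
      then show False using f False unfolding omega_exp_carrier_def by blast
    qed
    moreover have "g y = 0"
    proof (rule ccontr)
      assume "g y \<noteq> 0" then have "y \<in> {y. g y \<noteq> 0}" by simp
      then show False using g False unfolding omega_exp_carrier_def by blast
    qed
    ultimately show ?thesis by simp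
  qed
  then show ?thesis unfolding omega_exp_le_def by auto
next
  case False
  then obtain q where q: "Emap h (Field r) f q < Emap h (Field r) g q"
    "\<forall>y. (q, y) \<in> r' \<and> y \<noteq> q \<longrightarrow> Emap h (Field r) f y = Emap h (Field r) g y"
    using le unfolding omega_exp_le_def by blast
  have "q \<in> h ` Field r" using q(1) unfolding Emap_def by (auto split: if_splits)
  then obtain x where x: "x \<in> Field r" "q = h x" by blast
  have "f x < g x" using q(1) Emap_app[OF inj x(1), of f] Emap_app[OF inj x(1), of g] x(2) by simp
  moreover have "\<forall>y. (x, y) \<in> r \<and> y \<noteq> x \<longrightarrow> f y = g y"
  proof (intro allI impI)
    fix y assume y: "(x, y) \<in> r \<and> y \<noteq> x"
    then have yF: "y \<in> Field r" unfolding Field_def by blast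
    have "(h x, h y) \<in> r'" using comp y by blast
    moreover have "h y \<noteq> h x" using inj y yF x(1) unfolding inj_on_def by blast
    ultimately have "Emap h (Field r) f (h y) = Emap h (Field r) g (h y)" using q(2) x(2) by blast
    then show "f y = g y" using Emap_app[OF inj yF, of f] Emap_app[OF inj yF, of g] by simp
  qed
  ultimately show ?thesis unfolding omega_exp_le_def by blast
qed

lemma plus_reflect:
  assumes "omega_exp_le r (f(m := f m + 1)) (g(m := g m + 1))"
  shows "omega_exp_le r f g"
proof (cases "f(m := f m + 1) = g(m := g m + 1)")
  case True
  have "f y = g y" for y
  proof (cases "y = m")
    case True then show ?thesis using fun_cong[OF \<open>f(m := f m + 1) = g(m := g m + 1)\<close>, of m] by simp
  next
    case False then show ?thesis using fun_cong[OF \<open>f(m := f m + 1) = g(m := g m + 1)\<close>, of y] by simp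
  qed
  then show ?thesis unfolding omega_exp_le_def by auto
next
  case False
  then obtain q where q: "(f(m := f m + 1)) q < (g(m := g m + 1)) q"
    "\<forall>y. (q, y) \<in> r \<and> y \<noteq> q \<longrightarrow> (f(m := f m + 1)) y = (g(m := g m + 1)) y"
    using assms unfolding omega_exp_le_def by blast
  have "f q < g q" using q(1) by (cases "q = m") auto
  moreover have "\<forall>y. (q, y) \<in> r \<and> y \<noteq> q \<longrightarrow> f y = g y"
  proof (intro allI impI)
    fix y assume "(q, y) \<in> r \<and> y \<noteq> q"
    then have "(f(m := f m + 1)) y = (g(m := g m + 1)) y" using q(2) by blast
    then show "f y = g y" by (cases "y = m") auto
  qed
  ultimately show ?thesis unfolding omega_exp_le_def by blast
qed

lemma plus_not_le_zero: "\<not> omega_exp_le r (f(m := f m + 1)) (\<lambda>_. 0)"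
proof
  assume h: "omega_exp_le r (f(m := f m + 1)) (\<lambda>_. 0)"
  have "f(m := f m + 1) \<noteq> (\<lambda>_. 0)"
  proof
    assume "f(m := f m + 1) = (\<lambda>_. 0)"
    then have "(f(m := f m + 1)) m = 0" by simp
    then show False by simp
  qed
  then show False using h unfolding omega_exp_le_def by auto
qed

lemma delta_not_le:
  assumes wo: "Well_order r'" and pn: "p \<notin> h ` F" and sub: "h ` F \<subseteq> underS r' p"
  shows "\<not> omega_exp_le r' (\<lambda>q. if q = p then 1 else 0) (Emap h F f)"
proof
  assume h: "omega_exp_le r' (\<lambda>q. if q = p then 1 else 0) (Emap h F f)"
  have Ep: "Emap h F f p = 0" using pn unfolding Emap_def by simp
  have "(\<lambda>q. if q = p then 1 else 0) \<noteq> Emap h F f"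
  proof
    assume "(\<lambda>q. if q = p then 1 else 0) = Emap h F f"
    then have "(if p = p then 1 else 0) = Emap h F f p" by (rule fun_cong)
    then show False using Ep by simp
  qed
  then obtain q where q: "(if q = p then 1 else 0) < Emap h F f q"
    "\<forall>y. (q, y) \<in> r' \<and> y \<noteq> q \<longrightarrow> (if y = p then 1 else 0) = Emap h F f y"
    using h unfolding omega_exp_le_def by auto
  have qn: "q \<noteq> p" using q(1) Ep by auto
  have "q \<in> h ` F" using q(1) unfolding Emap_def by (auto split: if_splits)
  then have "(q, p) \<in> r'" using sub unfolding underS_def by blast
  then have "(if p = p then 1 else 0) = Emap h F f p" using q(2) qn by blast
  then show False using Ep by simp
qed

theorem mainTheorem10:
  fixes n :: nat and \<alpha> :: "nat \<Rightarrow> 'a rel" and i :: nat and \<beta> :: "'a rel"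
  assumes "n \<ge> 2"
    and "\<forall>j<n. Well_order (\<alpha> j) \<and> Field (\<alpha> j) \<noteq> {}"
    and "i < n"
    and "(\<alpha> i, \<beta>) \<in> ordLess"
  shows "width_less (prod_carrier n \<alpha>) (prod_le n \<alpha>)
                    (prod_carrier n (\<alpha>(i := \<beta>))) (prod_le n (\<alpha>(i := \<beta>)))"
proof -
  note n2 = assms(1) and woA = assms(2) and iN = assms(3) and lt = assms(4)
  let ?A = "prod_carrier n \<alpha>" and ?B = "prod_carrier n (\<alpha>(i := \<beta>))"
  let ?a' = "\<alpha>(i := \<beta>)"
  have woi: "Well_order (\<alpha> i)" using woA iN by blast
  obtain h where wob: "Well_order \<beta>" and emb: "embedS (\<alpha> i) \<beta> h"
    using lt unfolding ordLess_def by blast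
  have embed: "embed (\<alpha> i) \<beta> h" using emb unfolding embedS_def by blast
  have inj: "inj_on h (Field (\<alpha> i))" using embed_inj_on[OF woi embed] .
  have comp: "\<forall>a b. (a,b) \<in> \<alpha> i \<longrightarrow> (h a, h b) \<in> \<beta>" using embed_compat[OF embed] unfolding compat_def by blast
  have ofl: "wo_rel.ofilter \<beta> (h ` Field (\<alpha> i))" using embed_Field_ofilter[OF woi wob embed] .
  have ssub: "h ` Field (\<alpha> i) < Field \<beta>" using embedS_Field[OF woi emb] .
  obtain p where pF: "p \<in> Field \<beta>" and pimg: "h ` Field (\<alpha> i) = underS \<beta> p"
    using ofl ssub wo_rel.ofilter_underS_Field[of \<beta> "h ` Field (\<alpha> i)"] wob unfolding wo_rel_def by blast
  have pn: "p \<notin> h ` Field (\<alpha> i)" using pimg unfolding underS_def by blast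
  have hF: "h ` Field (\<alpha> i) \<subseteq> Field \<beta>" using ssub by blast
  define j where "j = (if i = 0 then 1 else (0::nat))"
  have jn: "j < n" "j \<noteq> i" using n2 iN unfolding j_def by auto
  obtain m where mF: "m \<in> Field (\<alpha> j)" using woA jn by blast
  define E where "E = Emap h (Field (\<alpha> i))"
  define e where "e a = (\<lambda>k. if k = i then E (a i) else if k = j then (a j)(m := a j m + 1) else a k)"
    for a :: "nat \<Rightarrow> 'a \<Rightarrow> nat"
  define x where "x = (\<lambda>k. if k = i then (\<lambda>q. if q = p then 1 else 0) else (\<lambda>_::'a. 0::nat))"
  have eB: "\<forall>a\<in>?A. e a \<in> ?B"
  proof
    fix a assume a: "a \<in> ?A"
    have "e a k \<in> omega_exp_carrier (?a' k)" if k: "k < n" for k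
    proof -
      have ak: "a k \<in> omega_exp_carrier (\<alpha> k)" using a k unfolding prod_carrier_def by blast
      show ?thesis
      proof (cases "k = i")
        case True
        then show ?thesis using Emap_carrier[OF inj hF ak[unfolded True]] unfolding e_def E_def by simp
      next
        case False
        note ki = False
        show ?thesis
        proof (cases "k = j")
          case True
          have "{y. ((a j)(m := a j m + 1)) y \<noteq> 0} \<subseteq> insert m {y. a j y \<noteq> 0}" by auto
          then show ?thesis using ak mF True ki unfolding e_def omega_exp_carrier_def
            by (auto intro: finite_subset)
        next
          case False then show ?thesis using ak ki unfolding e_def by simp
        qed
      qed
    qed
    moreover have "e a k = (\<lambda>_. 0)" if "k \<ge> n" for k
      using a that iN jn unfolding e_def prod_carrier_def by auto
    ultimately show "e a \<in> ?B" unfolding prod_carrier_def by blast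
  qed
  have xB: "x \<in> ?B"
  proof -
    have "x k \<in> omega_exp_carrier (?a' k)" if k: "k < n" for k
    proof (cases "k = i")
      case True
      have "{q. (if q = p then 1 else 0::nat) \<noteq> 0} = {p}" by auto
      then show ?thesis using True pF unfolding x_def omega_exp_carrier_def by auto
    next
      case False then show ?thesis unfolding x_def omega_exp_carrier_def by auto
    qed
    moreover have "x k = (\<lambda>_. 0)" if "k \<ge> n" for k using that iN unfolding x_def by auto
    ultimately show ?thesis unfolding prod_carrier_def by blast
  qed
  have refl: "\<forall>a\<in>?A. \<forall>b\<in>?A. prod_le n ?a' (e a) (e b) \<longrightarrow> prod_le n \<alpha> a b"
  proof (intro ballI impI)
    fix a b assume a: "a \<in> ?A" and b: "b \<in> ?A" and le: "prod_le n ?a' (e a) (e b)"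
    show "prod_le n \<alpha> a b" unfolding prod_le_def
    proof (intro allI impI)
      fix k assume k: "k < n"
      have lek: "omega_exp_le (?a' k) (e a k) (e b k)" using le k unfolding prod_le_def by blast
      show "omega_exp_le (\<alpha> k) (a k) (b k)"
      proof (cases "k = i")
        case True
        have "a i \<in> omega_exp_carrier (\<alpha> i)" "b i \<in> omega_exp_carrier (\<alpha> i)"
          using a b iN unfolding prod_carrier_def by blast+
        moreover have "omega_exp_le \<beta> (E (a i)) (E (b i))" using lek True unfolding e_def by simp
        ultimately show ?thesis using Emap_reflect[OF inj comp] True unfolding E_def by blast
      next
        case False
        note ki = False
        show ?thesis
        proof (cases "k = j")
          case True
          have pj: "omega_exp_le (\<alpha> j) ((a j)(m := a j m + 1)) ((b j)(m := b j m + 1))"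
            using lek ki True unfolding e_def by simp
          show ?thesis using plus_reflect[OF pj] True by simp
        next
          case False then show ?thesis using lek ki unfolding e_def by simp
        qed
      qed
    qed
  qed
  have inc: "\<forall>a\<in>?A. \<not> prod_le n ?a' (e a) x \<and> \<not> prod_le n ?a' x (e a)"
  proof (intro ballI conjI)
    fix a assume a: "a \<in> ?A"
    have "\<not> omega_exp_le (?a' j) (e a j) (x j)"
      using jn plus_not_le_zero unfolding e_def x_def by simp
    then show "\<not> prod_le n ?a' (e a) x" using jn unfolding prod_le_def by blast
    have "\<not> omega_exp_le \<beta> (\<lambda>q. if q = p then 1 else 0) (E (a i))"
      unfolding E_def by (rule delta_not_le[OF wob pn]) (simp add: pimg)
    then have "\<not> omega_exp_le (?a' i) (x i) (e a i)" unfolding e_def x_def by simp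
    then show "\<not> prod_le n ?a' x (e a)" using iN unfolding prod_le_def by blast
  qed
  have good: "\<forall>a. (\<forall>k::nat. a k \<in> ?A) \<longrightarrow> (\<exists>x y. (x::nat) < y \<and> prod_le n \<alpha> (a x) (a y))"
    using good_prod woA by blast
  have wfA: "wf (forest_rel ?A (prod_le n \<alpha>))" using wf_forest[OF good] .
  show ?thesis
    by (rule width_strict[where e=e and x=x and le="prod_le n \<alpha>" and le'="prod_le n ?a'", OF wfA eB xB refl inc])
qed


end
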